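(* Let $Q$ be a finite power associative loop and let $d>1$ be an integer. (i) Suppose that $Q$ has the Cauchy property for every prime $p$ dividing $d$. If $Q$ is uniquely $d$-divisible then $|Q|$ is coprime to $d$. (ii) Suppose that $Q$ has the elementwise Lagrange property. If $|Q|$ is coprime to $d$ then $Q$ is uniquely $d$-divisible.
   Context: A loop is a magma with identity in which all left and right translations are bijections; it is power associative if every element generates a subgroup. $Q$ is uniquely $d$-divisible if $x\mapsto x^d$ is a bijection of $Q$. $Q$ has the Cauchy property for a prime $p$ if whenever $p$ divides $|Q|$ there is $x\in Q$ of order $p$. $Q$ has the elementwise Lagrange property if the order of every element divides $|Q|$. *)

theory Defs
  imports Main "HOL-Computational_Algebra.Primes"
begin

definition is_loop :: "'a set \<Rightarrow> ('a \<Rightarrow> 'a \<Rightarrow> 'a) \<Rightarrow> 'a \<Rightarrow> bool" where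
  "is_loop Q m e \<longleftrightarrow>
     (\<forall>x\<in>Q. \<forall>y\<in>Q. m x y \<in> Q) \<and> e \<in> Q \<and>
     (\<forall>x\<in>Q. m e x = x \<and> m x e = x) \<and>
     (\<forall>a\<in>Q. bij_betw (\<lambda>x. m a x) Q Q \<and> bij_betw (\<lambda>x. m x a) Q Q)"

definition ldiv :: "'a set \<Rightarrow> ('a \<Rightarrow> 'a \<Rightarrow> 'a) \<Rightarrow> 'a \<Rightarrow> 'a \<Rightarrow> 'a" where
  "ldiv Q m a b = (THE x. x \<in> Q \<and> m a x = b)"
definition rdiv :: "'a set \<Rightarrow> ('a \<Rightarrow> 'a \<Rightarrow> 'a) \<Rightarrow> 'a \<Rightarrow> 'a \<Rightarrow> 'a" where
  "rdiv Q m b a = (THE x. x \<in> Q \<and> m x a = b)"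

inductive_set subloop_gen :: "'a set \<Rightarrow> ('a \<Rightarrow> 'a \<Rightarrow> 'a) \<Rightarrow> 'a \<Rightarrow> 'a set"
  for Q m x where
  base: "x \<in> subloop_gen Q m x"
| mult: "a \<in> subloop_gen Q m x \<Longrightarrow> b \<in> subloop_gen Q m x \<Longrightarrow> m a b \<in> subloop_gen Q m x"
| ldv: "a \<in> subloop_gen Q m x \<Longrightarrow> b \<in> subloop_gen Q m x \<Longrightarrow> ldiv Q m a b \<in> subloop_gen Q m x"
| rdv: "a \<in> subloop_gen Q m x \<Longrightarrow> b \<in> subloop_gen Q m x \<Longrightarrow> rdiv Q m a b \<in> subloop_gen Q m x"

definition power_assoc :: "'a set \<Rightarrow> ('a \<Rightarrow> 'a \<Rightarrow> 'a) \<Rightarrow> bool" where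
  "power_assoc Q m \<longleftrightarrow> (\<forall>x\<in>Q. \<forall>a\<in>subloop_gen Q m x. \<forall>b\<in>subloop_gen Q m x.
      \<forall>c\<in>subloop_gen Q m x. m (m a b) c = m a (m b c))"

primrec lpow :: "('a \<Rightarrow> 'a \<Rightarrow> 'a) \<Rightarrow> 'a \<Rightarrow> 'a \<Rightarrow> nat \<Rightarrow> 'a" where
  "lpow m e x 0 = e"
| "lpow m e x (Suc n) = m (lpow m e x n) x"

definition uniquely_divisible :: "'a set \<Rightarrow> ('a \<Rightarrow> 'a \<Rightarrow> 'a) \<Rightarrow> 'a \<Rightarrow> nat \<Rightarrow> bool" where
  "uniquely_divisible Q m e d \<longleftrightarrow> bij_betw (\<lambda>x. lpow m e x d) Q Q"

definition elt_order :: "('a \<Rightarrow> 'a \<Rightarrow> 'a) \<Rightarrow> 'a \<Rightarrow> 'a \<Rightarrow> nat" where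
  "elt_order m e x = (if \<exists>n>0. lpow m e x n = e then LEAST n. n > 0 \<and> lpow m e x n = e else 0)"

definition cauchy_prop :: "'a set \<Rightarrow> ('a \<Rightarrow> 'a \<Rightarrow> 'a) \<Rightarrow> 'a \<Rightarrow> nat \<Rightarrow> bool" where
  "cauchy_prop Q m e p \<longleftrightarrow> (p dvd card Q \<longrightarrow> (\<exists>x\<in>Q. elt_order m e x = p))"

definition elementwise_lagrange :: "'a set \<Rightarrow> ('a \<Rightarrow> 'a \<Rightarrow> 'a) \<Rightarrow> 'a \<Rightarrow> bool" where
  "elementwise_lagrange Q m e \<longleftrightarrow> (\<forall>x\<in>Q. elt_order m e x dvd card Q)"

end

theory Submission
  imports Defs "HOL-Number_Theory.Cong"
begin

context
  fixes Q :: "'a set" and m :: "'a \<Rightarrow> 'a \<Rightarrow> 'a" and e :: 'a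
  assumes L: "is_loop Q m e" and PA: "power_assoc Q m"
begin

lemma closed: "a \<in> Q \<Longrightarrow> b \<in> Q \<Longrightarrow> m a b \<in> Q"
  using L unfolding is_loop_def by blast

lemma e_in: "e \<in> Q" using L unfolding is_loop_def by blast

lemma unit_l: "x \<in> Q \<Longrightarrow> m e x = x" using L unfolding is_loop_def by blast
lemma unit_r: "x \<in> Q \<Longrightarrow> m x e = x" using L unfolding is_loop_def by blast

lemma lcancel: "a \<in> Q \<Longrightarrow> y \<in> Q \<Longrightarrow> z \<in> Q \<Longrightarrow> m a y = m a z \<Longrightarrow> y = z"
  using L unfolding is_loop_def bij_betw_def inj_on_def by blast

lemma ldiv_prop: assumes "a \<in> Q" "b \<in> Q" shows "ldiv Q m a b \<in> Q \<and> m a (ldiv Q m a b) = b"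
proof -
  have "b \<in> (\<lambda>x. m a x) ` Q" using L assms unfolding is_loop_def bij_betw_def by blast
  then obtain y where y: "y \<in> Q" "m a y = b" by blast
  have "\<exists>!y. y \<in> Q \<and> m a y = b" using y lcancel[OF assms(1)] by blast
  then show ?thesis unfolding ldiv_def by (rule theI')
qed

lemma rdiv_prop: assumes "a \<in> Q" "b \<in> Q" shows "rdiv Q m b a \<in> Q \<and> m (rdiv Q m b a) a = b"
proof -
  have "b \<in> (\<lambda>x. m x a) ` Q" using L assms unfolding is_loop_def bij_betw_def by blast
  then obtain y where y: "y \<in> Q" "m y a = b" by blast
  have "\<exists>!y. y \<in> Q \<and> m y a = b"
    using y L assms unfolding is_loop_def bij_betw_def inj_on_def by metis
  then show ?thesis unfolding rdiv_def by (rule theI')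
qed

lemma gen_sub: assumes "x \<in> Q" shows "subloop_gen Q m x \<subseteq> Q"
proof
  fix y assume "y \<in> subloop_gen Q m x"
  then show "y \<in> Q"
    by induction (auto simp: assms closed ldiv_prop rdiv_prop)
qed

lemma e_gen: assumes "x \<in> Q" shows "e \<in> subloop_gen Q m x"
proof -
  have "ldiv Q m x x = e"
  proof (rule lcancel[OF assms])
    show "ldiv Q m x x \<in> Q" "e \<in> Q" using ldiv_prop[OF assms assms] e_in by auto
    show "m x (ldiv Q m x x) = m x e" using ldiv_prop[OF assms assms] unit_r[OF assms] by simp
  qed
  moreover have "ldiv Q m x x \<in> subloop_gen Q m x"
    by (rule subloop_gen.ldv[OF subloop_gen.base subloop_gen.base])
  ultimately show ?thesis by simp
qed

lemma pow_gen: assumes "x \<in> Q" shows "lpow m e x n \<in> subloop_gen Q m x"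
proof (induction n)
  case 0 then show ?case using e_gen[OF assms] by simp
next
  case (Suc n) then show ?case by (simp add: subloop_gen.mult subloop_gen.base)
qed

lemma pow_in: assumes "x \<in> Q" shows "lpow m e x n \<in> Q"
  using pow_gen[OF assms] gen_sub[OF assms] by (rule subsetD[rotated])

lemma pow_add: assumes "x \<in> Q" shows "lpow m e x (a + b) = m (lpow m e x a) (lpow m e x b)"
proof (induction b)
  case 0
  have "m (lpow m e x a) e = lpow m e x a" by (rule unit_r[OF pow_in[OF assms]])
  then show ?case by simp
next
  case (Suc b)
  have A: "\<forall>a\<in>subloop_gen Q m x. \<forall>b\<in>subloop_gen Q m x. \<forall>c\<in>subloop_gen Q m x. m (m a b) c = m a (m b c)"
    using PA assms unfolding power_assoc_def by blast
  have "lpow m e x (a + Suc b) = m (m (lpow m e x a) (lpow m e x b)) x" using Suc by simp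
  also have "\<dots> = m (lpow m e x a) (m (lpow m e x b) x)"
    using A pow_gen[OF assms, of a] pow_gen[OF assms, of b] subloop_gen.base[of x Q m] by blast
  finally show ?case by simp
qed

lemma pow_one: "x \<in> Q \<Longrightarrow> lpow m e x 1 = x" by (simp add: unit_l)

lemma pow_e: "lpow m e e n = e" by (induction n) (auto simp: unit_l e_in)

lemma pow_mult: assumes "x \<in> Q" shows "lpow m e (lpow m e x a) b = lpow m e x (a * b)"
proof (induction b)
  case 0 then show ?case by simp
next
  case (Suc b)
  then show ?case using pow_add[OF assms, of "a*b" a] by (simp add: add.commute)
qed

lemma pow_order_exists: assumes "x \<in> Q" "finite Q" shows "\<exists>n>0. lpow m e x n = e"
proof -
  have "range (lpow m e x) \<subseteq> Q" using pow_in assms by blast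
  then have "finite (range (lpow m e x))" using assms finite_subset by blast
  then have "\<not> inj (lpow m e x)" using finite_imageD by blast
  then obtain i j where ij: "i \<noteq> j" "lpow m e x i = lpow m e x j" unfolding inj_def by blast
  then obtain i j where ij: "i < j" "lpow m e x i = lpow m e x j"
    by (metis linorder_neqE_nat)
  have "m (lpow m e x i) (lpow m e x (j - i)) = m (lpow m e x i) e"
    using ij pow_add[OF assms(1), of i "j-i"] unit_r pow_in assms by simp
  then have "lpow m e x (j - i) = e" using lcancel pow_in assms e_in by blast
  then show ?thesis using ij by (intro exI[of _ "j-i"]) auto
qed

lemma order_props: assumes "x \<in> Q" "finite Q"
  shows "elt_order m e x > 0 \<and> lpow m e x (elt_order m e x) = e"
proof -
  obtain n where "n > 0" "lpow m e x n = e" using pow_order_exists assms by blast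
  then have "(LEAST n. n > 0 \<and> lpow m e x n = e) > 0 \<and> lpow m e x (LEAST n. n > 0 \<and> lpow m e x n = e) = e"
    by (metis (mono_tags, lifting) LeastI)
  then show ?thesis unfolding elt_order_def using pow_order_exists assms by simp
qed

lemma pow_mod: assumes "x \<in> Q" "n > 0" "lpow m e x n = e"
  shows "lpow m e x k = lpow m e x (k mod n)"
proof -
  have "lpow m e x k = lpow m e x (n * (k div n) + k mod n)" by simp
  also have "\<dots> = m (lpow m e x (n * (k div n))) (lpow m e x (k mod n))"
    using pow_add assms by blast
  also have "lpow m e x (n * (k div n)) = e"
    using pow_mult[OF assms(1), of n "k div n"] assms pow_e by simp
  finally show ?thesis using unit_l pow_in assms by simp
qed

end

theorem lemma1p6:
  fixes Q :: "'a set" and m :: "'a \<Rightarrow> 'a \<Rightarrow> 'a" and e :: 'a and d :: nat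
  assumes "is_loop Q m e" and "finite Q" and "power_assoc Q m" and "d > 1"
  shows "((\<forall>p. prime p \<and> p dvd d \<longrightarrow> cauchy_prop Q m e p) \<longrightarrow>
            uniquely_divisible Q m e d \<longrightarrow> coprime (card Q) d)
       \<and> (elementwise_lagrange Q m e \<longrightarrow>
            coprime (card Q) d \<longrightarrow> uniquely_divisible Q m e d)"
proof (intro conjI impI)
  note L = assms(1) and PA = assms(3)
  assume C: "\<forall>p. prime p \<and> p dvd d \<longrightarrow> cauchy_prop Q m e p" and U: "uniquely_divisible Q m e d"
  show "coprime (card Q) d"
  proof (rule ccontr)
    assume "\<not> coprime (card Q) d"
    then have "gcd (card Q) d \<noteq> 1" by blast
    then obtain p where "prime p" "p dvd gcd (card Q) d" using prime_factor_nat by blast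
    then have p: "prime p" "p dvd card Q" "p dvd d" by auto
    then obtain x where x: "x \<in> Q" "elt_order m e x = p" using C unfolding cauchy_prop_def by blast
    have p0: "p > 1" using p prime_gt_1_nat by blast
    have xp: "lpow m e x p = e" using order_props[OF L PA x(1) assms(2)] x by simp
    have "lpow m e x d = lpow m e x (d mod p)" using pow_mod[OF L PA x(1) _ xp] p0 by simp
    then have xd: "lpow m e x d = e" using p by simp
    have "x \<noteq> e"
    proof
      assume "x = e"
      have "elt_order m e e = 1"
      proof -
        have "lpow m e e 1 = e" using pow_e[OF L PA] by blast
        then have "(LEAST n. n > 0 \<and> lpow m e e n = e) = 1"
          by (intro Least_equality) auto
        then show ?thesis unfolding elt_order_def using \<open>lpow m e e 1 = e\<close> by auto
      qed
      then show False using x p0 \<open>x = e\<close> by simp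
    qed
    moreover have "lpow m e e d = e" using pow_e[OF L PA] by blast
    moreover have "inj_on (\<lambda>x. lpow m e x d) Q" using U unfolding uniquely_divisible_def bij_betw_def by blast
    ultimately show False using inj_onD[of "\<lambda>x. lpow m e x d" Q x e] xd x e_in[OF L PA] by simp
  qed
next
  note L = assms(1) and PA = assms(3)
  assume EL: "elementwise_lagrange Q m e" and cop: "coprime (card Q) d"
  have sub: "(\<lambda>x. lpow m e x d) ` Q \<subseteq> Q" using pow_in[OF L PA] by blast
  have sup: "Q \<subseteq> (\<lambda>x. lpow m e x d) ` Q"
  proof
    fix x assume x: "x \<in> Q"
    define n where "n = elt_order m e x"
    have n: "n > 0" "lpow m e x n = e" using order_props[OF L PA x assms(2)] n_def by auto
    have "n dvd card Q" using EL x n_def unfolding elementwise_lagrange_def by blast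
    then have "coprime d n" using coprime_divisors[OF _ dvd_refl cop] coprime_commute by blast
    then obtain k where k: "[d * k = Suc 0] (mod n)" using cong_solve_coprime_nat by blast
    have "lpow m e (lpow m e x k) d = lpow m e x (k * d)" using pow_mult[OF L PA x] by blast
    also have "\<dots> = lpow m e x ((k * d) mod n)" using pow_mod[OF L PA x n] by blast
    also have "(k * d) mod n = Suc 0 mod n" using k unfolding cong_def by (simp add: mult.commute)
    also have "lpow m e x (Suc 0 mod n) = lpow m e x (Suc 0)" using pow_mod[OF L PA x n] by metis
    also have "\<dots> = x" using pow_one[OF L PA x] by simp
    finally show "x \<in> (\<lambda>x. lpow m e x d) ` Q" using pow_in[OF L PA x] by (metis imageI)
  qed
  have img: "(\<lambda>x. lpow m e x d) ` Q = Q" using sub sup by blast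
  then have "inj_on (\<lambda>x. lpow m e x d) Q" using assms(2) by (simp add: eq_card_imp_inj_on)
  then show "uniquely_divisible Q m e d" unfolding uniquely_divisible_def bij_betw_def using img by blast
qed

end
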